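(* For every finite simple graph $G$, $\operatorname{box}(G) \le \operatorname{tw}(G) + 2$.
   Context: An axis-parallel $b$-dimensional box is a Cartesian product $R_1\times\cdots\times R_b$ of closed real intervals $R_i=[a_i,b_i]$. The boxicity $\operatorname{box}(G)$ of a graph $G$ is the minimum $b$ such that $G$ is the intersection graph of a family of axis-parallel $b$-dimensional boxes (one box per vertex, two distinct vertices adjacent iff their boxes intersect). A tree decomposition of $G=(V,E)$ is a pair $(\{X_i : i\in I\},T)$ with $T$ a tree on node set $I$ and $X_i\subseteq V$, such that $\bigcup_i X_i=V$, every edge has both endpoints in some $X_i$, and whenever $j$ lies on the path in $T$ from $i$ to $k$ we have $X_i\cap X_k\subseteq X_j$. Its width is $\max_i |X_i|-1$, and the treewidth $\operatorname{tw}(G)$ is the minimum width of a tree decomposition of $G$. *)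

theory Defs
  imports Main "HOL-Library.Extended_Real" Complex_Main
begin

definition simple_graph :: "'a set \<Rightarrow> ('a \<Rightarrow> 'a \<Rightarrow> bool) \<Rightarrow> bool" where
  "simple_graph V E \<longleftrightarrow> finite V \<and> (\<forall>u v. E u v \<longrightarrow> u \<in> V \<and> v \<in> V \<and> u \<noteq> v \<and> E v u)"

(* Box representation in dimension b: vertex v gets the box
   [lo v 0, hi v 0] x ... x [lo v (b-1), hi v (b-1)].
   Two closed boxes intersect iff in every coordinate the intervals intersect. *)
definition box_rep :: "'a set \<Rightarrow> ('a \<Rightarrow> 'a \<Rightarrow> bool) \<Rightarrow> nat \<Rightarrow> bool" where
  "box_rep V E b \<longleftrightarrow> (\<exists>lo hi :: 'a \<Rightarrow> nat \<Rightarrow> real.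
      (\<forall>v\<in>V. \<forall>i<b. lo v i \<le> hi v i) \<and>
      (\<forall>u\<in>V. \<forall>v\<in>V. u \<noteq> v \<longrightarrow>
          (E u v \<longleftrightarrow> (\<forall>i<b. max (lo u i) (lo v i) \<le> min (hi u i) (hi v i)))))"

definition boxicity :: "'a set \<Rightarrow> ('a \<Rightarrow> 'a \<Rightarrow> bool) \<Rightarrow> nat" where
  "boxicity V E = (LEAST b. box_rep V E b)"

definition simple_path :: "'i set \<Rightarrow> ('i \<Rightarrow> 'i \<Rightarrow> bool) \<Rightarrow> 'i list \<Rightarrow> 'i \<Rightarrow> 'i \<Rightarrow> bool" where
  "simple_path I T p x y \<longleftrightarrow> p \<noteq> [] \<and> hd p = x \<and> last p = y \<and> distinct p \<and>
      set p \<subseteq> I \<and> (\<forall>k. Suc k < length p \<longrightarrow> T (p ! k) (p ! Suc k))"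

definition is_tree :: "'i set \<Rightarrow> ('i \<Rightarrow> 'i \<Rightarrow> bool) \<Rightarrow> bool" where
  "is_tree I T \<longleftrightarrow> finite I \<and> I \<noteq> {} \<and>
      (\<forall>u v. T u v \<longrightarrow> u \<in> I \<and> v \<in> I \<and> u \<noteq> v \<and> T v u) \<and>
      (\<forall>x\<in>I. \<forall>y\<in>I. \<exists>!p. simple_path I T p x y)"

definition tree_decomp :: "'a set \<Rightarrow> ('a \<Rightarrow> 'a \<Rightarrow> bool) \<Rightarrow> 'i set \<Rightarrow> ('i \<Rightarrow> 'i \<Rightarrow> bool) \<Rightarrow> ('i \<Rightarrow> 'a set) \<Rightarrow> bool" where
  "tree_decomp V E I T X \<longleftrightarrow> is_tree I T \<and>
      (\<forall>i\<in>I. X i \<subseteq> V) \<and> (\<Union>i\<in>I. X i) = V \<and>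
      (\<forall>u v. E u v \<longrightarrow> (\<exists>i\<in>I. u \<in> X i \<and> v \<in> X i)) \<and>
      (\<forall>i\<in>I. \<forall>k\<in>I. \<forall>p. simple_path I T p i k \<longrightarrow> (\<forall>j\<in>set p. X i \<inter> X k \<subseteq> X j))"

definition decomp_width :: "'i set \<Rightarrow> ('i \<Rightarrow> 'a set) \<Rightarrow> int" where
  "decomp_width I X = int (Max ((\<lambda>i. card (X i)) ` I)) - 1"

(* Treewidth: minimal width over tree decompositions; trees are indexed by nat
   (w.l.o.g., as every finite tree is isomorphic to one on a subset of nat). *)
definition treewidth :: "'a set \<Rightarrow> ('a \<Rightarrow> 'a \<Rightarrow> bool) \<Rightarrow> int" where
  "treewidth V E = (LEAST w. \<exists>(I::nat set) T X. tree_decomp V E I T X \<and> decomp_width I X = w)"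

end

theory Submission
  imports Defs "HOL-Library.Sublist" "HOL-Library.List_Lexorder"
begin


definition walk :: "('i \<Rightarrow> 'i \<Rightarrow> bool) \<Rightarrow> 'i list \<Rightarrow> bool" where
  "walk T p \<longleftrightarrow> (\<forall>k. Suc k < length p \<longrightarrow> T (p ! k) (p ! Suc k))"

lemma walk_Cons: "walk T (a # q) \<longleftrightarrow> (q \<noteq> [] \<longrightarrow> T a (hd q)) \<and> walk T q"
proof
  assume h: "walk T (a # q)"
  have "q \<noteq> [] \<longrightarrow> T a (hd q)"
  proof
    assume "q \<noteq> []"
    then have "Suc 0 < length (a # q)" by simp
    moreover have "Suc 0 < length (a#q) \<longrightarrow> T ((a#q) ! 0) ((a#q) ! Suc 0)" using h unfolding walk_def by (rule spec)
    ultimately have "T ((a#q) ! 0) ((a#q) ! Suc 0)" by (rule mp[rotated])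
    then show "T a (hd q)" using \<open>q \<noteq> []\<close> by (simp add: hd_conv_nth)
  qed
  moreover have "walk T q" unfolding walk_def
  proof (intro allI impI)
    fix k assume "Suc k < length q"
    then have "Suc (Suc k) < length (a # q)" by simp
    moreover have "Suc (Suc k) < length (a#q) \<longrightarrow> T ((a#q) ! Suc k) ((a#q) ! Suc (Suc k))" using h unfolding walk_def by (rule spec)
    ultimately have "T ((a#q) ! Suc k) ((a#q) ! Suc (Suc k))" by (rule mp[rotated])
    then show "T (q ! k) (q ! Suc k)" by simp
  qed
  ultimately show "(q \<noteq> [] \<longrightarrow> T a (hd q)) \<and> walk T q" by blast
next
  assume h: "(q \<noteq> [] \<longrightarrow> T a (hd q)) \<and> walk T q"
  show "walk T (a # q)" unfolding walk_def
  proof (intro allI impI)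
    fix k assume k: "Suc k < length (a # q)"
    show "T ((a # q) ! k) ((a # q) ! Suc k)"
    proof (cases k)
      case 0
      then have "q \<noteq> []" using k by auto
      then show ?thesis using h 0 by (simp add: hd_conv_nth)
    next
      case (Suc k')
      then have "Suc k' < length q" using k by simp
      then show ?thesis using h Suc unfolding walk_def by simp
    qed
  qed
qed

lemma simple_path_walk: "simple_path I T p x y \<Longrightarrow> walk T p"
  unfolding simple_path_def walk_def by (elim conjE)

lemma sp_parts: "simple_path I T p x y \<Longrightarrow> p \<noteq> [] \<and> hd p = x \<and> last p = y \<and> distinct p \<and> set p \<subseteq> I"
  unfolding simple_path_def by (elim conjE) (intro conjI)

lemma sp_edge: "simple_path I T p x y \<Longrightarrow> Suc k < length p \<Longrightarrow> T (p ! k) (p ! Suc k)"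
proof -
  assume "simple_path I T p x y" "Suc k < length p"
  moreover have "simple_path I T p x y \<Longrightarrow> \<forall>k. Suc k < length p \<longrightarrow> T (p ! k) (p ! Suc k)"
    unfolding simple_path_def by (elim conjE)
  ultimately show ?thesis by blast
qed

lemma take_path:
  assumes "simple_path I T p x y" "i < length p"
  shows "simple_path I T (take (Suc i) p) x (p ! i)"
proof -
  have p: "p \<noteq> []" "hd p = x" "distinct p" "set p \<subseteq> I"
    "\<forall>k. Suc k < length p \<longrightarrow> T (p ! k) (p ! Suc k)"
    using sp_parts[OF assms(1)] sp_edge[OF assms(1)] by auto
  show ?thesis unfolding simple_path_def
  proof (intro conjI allI impI)
    show "take (Suc i) p \<noteq> []" using p(1) by simp
    show "hd (take (Suc i) p) = x" using p(1,2) by simp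
    show "last (take (Suc i) p) = p ! i" using assms(2) by (simp add: take_Suc_conv_app_nth)
    show "distinct (take (Suc i) p)" using p(3) by (rule distinct_take)
    show "set (take (Suc i) p) \<subseteq> I" using set_take_subset p(4) by (rule subset_trans)
  next
    fix k assume "Suc k < length (take (Suc i) p)"
    then have k: "Suc k < length p" "Suc k < Suc i" by auto
    then have "T (p ! k) (p ! Suc k)" using p(5) by blast
    then show "T (take (Suc i) p ! k) (take (Suc i) p ! Suc k)" using k by simp
  qed
qed

lemma prefix_le_list: "prefix (xs::'b::linorder list) ys \<Longrightarrow> xs \<le> ys"
proof (induction xs arbitrary: ys)
  case Nil then show ?case by simp
next
  case (Cons a xs)
  then obtain ys' where "ys = a # ys'" "prefix xs ys'" by (cases ys) auto
  then show ?case using Cons by simp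
qed

lemma lex_split: "(b::'b::linorder) < c \<Longrightarrow> as @ b # xs < as @ c # ys"
  by (induction as) auto

locale TD =
  fixes V :: "'a set" and E :: "'a \<Rightarrow> 'a \<Rightarrow> bool"
    and I :: "'i::linorder set" and T :: "'i \<Rightarrow> 'i \<Rightarrow> bool" and X :: "'i \<Rightarrow> 'a set"
  assumes sg: "simple_graph V E" and td: "tree_decomp V E I T X"
begin

lemma tree: "is_tree I T" using td unfolding tree_decomp_def by blast
lemma finI: "finite I" using tree unfolding is_tree_def by blast
lemma Ine: "I \<noteq> {}" using tree unfolding is_tree_def by blast
lemma Tprops: "T u v \<Longrightarrow> u \<in> I \<and> v \<in> I \<and> u \<noteq> v \<and> T v u" using tree unfolding is_tree_def by blast
lemma uniq_path: "x \<in> I \<Longrightarrow> y \<in> I \<Longrightarrow> \<exists>!p. simple_path I T p x y"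
  using tree unfolding is_tree_def by blast
lemma XV: "t \<in> I \<Longrightarrow> X t \<subseteq> V" using td unfolding tree_decomp_def by blast
lemma UX: "(\<Union>i\<in>I. X i) = V" using td unfolding tree_decomp_def by blast
lemma Ebag: "E u v \<Longrightarrow> \<exists>i\<in>I. u \<in> X i \<and> v \<in> X i" using td unfolding tree_decomp_def by blast
lemma conv0: "\<forall>i\<in>I. \<forall>k\<in>I. \<forall>p. simple_path I T p i k \<longrightarrow> (\<forall>j\<in>set p. X i \<inter> X k \<subseteq> X j)"
  using td unfolding tree_decomp_def by (elim conjE)
lemma conv: "i \<in> I \<Longrightarrow> k \<in> I \<Longrightarrow> simple_path I T p i k \<Longrightarrow> j \<in> set p \<Longrightarrow> X i \<inter> X k \<subseteq> X j"
  using conv0 by blast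
lemma finV: "finite V" using sg unfolding simple_graph_def by blast
lemma Eprops: "E u v \<Longrightarrow> u \<in> V \<and> v \<in> V \<and> u \<noteq> v \<and> E v u"
  using sg unfolding simple_graph_def by blast

definition root where "root = (SOME x. x \<in> I)"
lemma root_in: "root \<in> I" unfolding root_def using Ine some_in_eq[of I] by simp

definition P where "P t = (THE p. simple_path I T p root t)"

lemma P_path: "t \<in> I \<Longrightarrow> simple_path I T (P t) root t"
proof -
  assume t: "t \<in> I"
  have "\<exists>!p. simple_path I T p root t" by (rule uniq_path[OF root_in t])
  then show ?thesis unfolding P_def by (rule theI')
qed

lemma P_unique: "t \<in> I \<Longrightarrow> simple_path I T p root t \<Longrightarrow> P t = p"
  unfolding P_def by (rule the1_equality[OF uniq_path[OF root_in]])

lemma P_parts: "t \<in> I \<Longrightarrow> P t \<noteq> [] \<and> hd (P t) = root \<and> last (P t) = t \<and> distinct (P t) \<and> set (P t) \<subseteq> I"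
  by (rule sp_parts[OF P_path])
lemma P_ne: "t \<in> I \<Longrightarrow> P t \<noteq> []" using P_parts by (rule conjunct1)
lemma P_hd: "t \<in> I \<Longrightarrow> hd (P t) = root" using P_parts[THEN conjunct2] by (rule conjunct1)
lemma P_last: "t \<in> I \<Longrightarrow> last (P t) = t" using P_parts[THEN conjunct2, THEN conjunct2] by (rule conjunct1)
lemma P_dist: "t \<in> I \<Longrightarrow> distinct (P t)" using P_parts[THEN conjunct2, THEN conjunct2, THEN conjunct2] by (rule conjunct1)
lemma P_set: "t \<in> I \<Longrightarrow> set (P t) \<subseteq> I" using P_parts[THEN conjunct2, THEN conjunct2, THEN conjunct2] by (rule conjunct2)
lemma P_inj: "s \<in> I \<Longrightarrow> t \<in> I \<Longrightarrow> P s = P t \<Longrightarrow> s = t"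
proof -
  assume a: "s \<in> I" "t \<in> I" "P s = P t"
  have "s = last (P s)" using P_last[OF a(1)] by simp
  also have "\<dots> = last (P t)" using a(3) by simp
  also have "\<dots> = t" using P_last[OF a(2)] by simp
  finally show ?thesis .
qed

lemma mem_P_prefix:
  assumes t: "t \<in> I" and s: "s \<in> set (P t)"
  shows "prefix (P s) (P t)"
proof -
  obtain i where i: "i < length (P t)" "P t ! i = s" using s by (auto simp: in_set_conv_nth)
  have sI: "s \<in> I" using s P_set t by blast
  have "simple_path I T (take (Suc i) (P t)) root s" using take_path[OF P_path[OF t] i(1)] i(2) by simp
  then have "P s = take (Suc i) (P t)" using P_unique sI by blast
  then show ?thesis by (simp add: take_is_prefix)
qed

definition anc where "anc s t \<longleftrightarrow> s \<in> I \<and> t \<in> I \<and> prefix (P s) (P t)"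
definition depth where "depth t = length (P t)"

lemma anc_refl: "t \<in> I \<Longrightarrow> anc t t" unfolding anc_def by simp
lemma anc_trans: "anc a b \<Longrightarrow> anc b c \<Longrightarrow> anc a c" unfolding anc_def using prefix_order.trans[of "P a" "P b" "P c"] by simp
lemma anc_antisym: "anc s t \<Longrightarrow> anc t s \<Longrightarrow> s = t" unfolding anc_def
proof -
  assume "s \<in> I \<and> t \<in> I \<and> prefix (P s) (P t)" "t \<in> I \<and> s \<in> I \<and> prefix (P t) (P s)"
  then show ?thesis using P_inj[of s t] prefix_order.antisym[of "P s" "P t"] by simp
qed
lemma anc_depth_le: "anc a b \<Longrightarrow> depth a \<le> depth b" unfolding anc_def depth_def
  by (simp add: prefix_length_le)
lemma anc_depth_less: assumes "anc a b" "a \<noteq> b" shows "depth a < depth b"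
proof -
  have h: "a \<in> I" "b \<in> I" "prefix (P a) (P b)" using assms(1) unfolding anc_def by simp_all
  then have "P a \<noteq> P b" using P_inj assms(2) by blast
  then have "strict_prefix (P a) (P b)" using h by (simp add: strict_prefix_def)
  then show ?thesis unfolding depth_def by (rule prefix_length_less)
qed
lemma anc_depth_eq: "anc a b \<Longrightarrow> depth b \<le> depth a \<Longrightarrow> a = b"
  using anc_depth_less[of a b] by (cases "a = b") auto
lemma anc_total: "anc a t \<Longrightarrow> anc b t \<Longrightarrow> anc a b \<or> anc b a"
  unfolding anc_def using prefix_same_cases[of "P a" "P t" "P b"] by simp
lemma anc_mem: "t \<in> I \<Longrightarrow> s \<in> set (P t) \<Longrightarrow> anc s t"
  unfolding anc_def using mem_P_prefix[of t s] P_set[of t] by auto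

lemma depth_le: "t \<in> I \<Longrightarrow> depth t \<le> card I"
proof -
  assume t: "t \<in> I"
  have "distinct (P t)" using P_dist[OF t] .
  then have "length (P t) = card (set (P t))" by (simp add: distinct_card)
  also have "\<dots> \<le> card I" using P_set[OF t] finI by (rule card_mono[rotated])
  finally show ?thesis unfolding depth_def .
qed

lemma extend:
  assumes a: "a \<in> I" and b: "b \<in> I" and Tba: "T b a" and na: "a \<notin> set (P b)"
  shows "P a = P b @ [a]"
proof -
  have pb: "simple_path I T (P b) root b" using P_path b by blast
  have "simple_path I T (P b @ [a]) root a"
    unfolding simple_path_def
  proof (intro conjI allI impI)
    show "P b @ [a] \<noteq> []" by simp
    show "hd (P b @ [a]) = root" using P_hd[OF b] P_ne[OF b] by simp
    show "last (P b @ [a]) = a" by simp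
    show "distinct (P b @ [a])" using P_dist[OF b] na by simp
    show "set (P b @ [a]) \<subseteq> I" using P_set[OF b] a by simp
  next
    fix k assume k: "Suc k < length (P b @ [a])"
    show "T ((P b @ [a]) ! k) ((P b @ [a]) ! Suc k)"
    proof (cases "Suc k < length (P b)")
      case True
      then have "T (P b ! k) (P b ! Suc k)" using sp_edge[OF pb] by blast
      then show ?thesis using True by (simp add: nth_append)
    next
      case False
      then have kk: "Suc k = length (P b)" using k by simp
      then have "k = length (P b) - 1" by simp
      then have "(P b @ [a]) ! k = last (P b)" using P_ne[OF b] kk
        by (simp add: nth_append last_conv_nth)
      moreover have "(P b @ [a]) ! Suc k = a" using kk by (simp add: nth_append)
      ultimately show ?thesis using P_last[OF b] Tba by simp
    qed
  qed
  then show ?thesis using P_unique a by blast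
qed

lemma edge: assumes "T a b" shows "P b = P a @ [b] \<or> P a = P b @ [a]"
proof -
  have a: "a \<in> I" and b: "b \<in> I" and ne: "a \<noteq> b" and Tba: "T b a" using Tprops assms by auto
  show ?thesis
  proof (cases "a \<in> set (P b)")
    case False then show ?thesis using extend[OF a b Tba] by simp
  next
    case True
    then have pab: "prefix (P a) (P b)" using mem_P_prefix b by blast
    have "b \<notin> set (P a)"
    proof
      assume "b \<in> set (P a)"
      then have "prefix (P b) (P a)" using mem_P_prefix a by blast
      then have "P a = P b" using pab by simp
      then show False using P_inj a b ne by blast
    qed
    then show ?thesis using extend[OF b a assms] by simp
  qed
qed

lemma walk_pass:
  "walk T p \<Longrightarrow> p \<noteq> [] \<Longrightarrow> set p \<subseteq> I \<Longrightarrow> anc s (last p) \<Longrightarrow> \<not> anc s (hd p) \<Longrightarrow> s \<in> set p"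
proof (induction p)
  case Nil then show ?case by simp
next
  case (Cons a q)
  have w: "walk T (a # q)" and sI: "set (a # q) \<subseteq> I" and al: "anc s (last (a # q))"
    and na: "\<not> anc s a" using Cons.prems by simp_all
  show ?case
  proof (cases "q = []")
    case True then show ?thesis using al na by simp
  next
    case False
    let ?y = "hd q"
    have Tay: "T a ?y" and wq: "walk T q" using w False walk_Cons[of T a q] by simp_all
    have sq: "set q \<subseteq> I" using sI by simp
    have lq: "last (a # q) = last q" using False by simp
    show ?thesis
    proof (cases "anc s ?y")
      case False
      have "s \<in> set q" using Cons.IH[OF wq \<open>q \<noteq> []\<close> sq] al lq False by simp
      then show ?thesis by simp
    next
      case True
      from edge[OF Tay] show ?thesis
      proof
        assume h: "P ?y = P a @ [?y]"
        have sIs: "s \<in> I" using True unfolding anc_def by simp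
        have aI: "a \<in> I" using Tprops[OF Tay] by simp
        have "prefix (P s) (P a @ [?y])" using True h unfolding anc_def by simp
        then have "P s = P a @ [?y] \<or> prefix (P s) (P a)" by simp
        moreover have "\<not> prefix (P s) (P a)" using na sIs aI unfolding anc_def by simp
        ultimately have "P s = P ?y" using h by simp
        then have "s = ?y" using P_inj[of s ?y] sIs Tprops[OF Tay] by simp
        then show ?thesis using False by simp
      next
        assume h: "P a = P ?y @ [a]"
        have "anc ?y a" using h Tprops[OF Tay] unfolding anc_def by simp
        then have "anc s a" using True anc_trans by blast
        then show ?thesis using na by simp
      qed
    qed
  qed
qed

lemma walk_top:
  "walk T p \<Longrightarrow> p \<noteq> [] \<Longrightarrow> set p \<subseteq> I \<Longrightarrow> \<exists>m\<in>set p. \<forall>x\<in>set p. anc m x"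
proof (induction p)
  case Nil then show ?case by simp
next
  case (Cons a q)
  have w: "walk T (a # q)" and sI: "set (a # q) \<subseteq> I" using Cons.prems by simp_all
  show ?case
  proof (cases "q = []")
    case True then show ?thesis using sI anc_refl by simp
  next
    case False
    let ?y = "hd q"
    have Tay: "T a ?y" and wq: "walk T q" using w False walk_Cons[of T a q] by simp_all
    have sq: "set q \<subseteq> I" using sI by simp
    obtain m where m: "m \<in> set q" "\<forall>x\<in>set q. anc m x" using Cons.IH[OF wq False sq] by blast
    have yq: "?y \<in> set q" using False by simp
    have aI: "a \<in> I" and yI: "?y \<in> I" using Tprops[OF Tay] by simp_all
    from edge[OF Tay] show ?thesis
    proof
      assume h: "P ?y = P a @ [?y]"
      have aay: "anc a ?y" using h aI yI unfolding anc_def by simp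
      show ?thesis
      proof (cases "m = ?y")
        case True
        have "\<forall>x\<in>set (a # q). anc a x"
        proof
          fix x assume xa: "x \<in> set (a # q)"
          show "anc a x"
          proof (cases "x = a")
            assume "x = a" then show ?thesis using anc_refl aI by simp
          next
            assume "x \<noteq> a" then have "x \<in> set q" using xa by simp
            then have "anc ?y x" using m True by simp
            then show ?thesis using aay anc_trans by blast
          qed
        qed
        then show ?thesis by simp
      next
        case False
        have may: "anc m ?y" using m yq by blast
        then have mI: "m \<in> I" unfolding anc_def by simp
        have "prefix (P m) (P a @ [?y])" using may h unfolding anc_def by simp
        moreover have "P m \<noteq> P ?y" using False P_inj[of m ?y] mI yI by auto
        ultimately have "prefix (P m) (P a)" using h by simp
        then have "anc m a" using mI aI unfolding anc_def by simp
        then show ?thesis using m by auto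
      qed
    next
      assume h: "P a = P ?y @ [a]"
      have "anc ?y a" using h aI yI unfolding anc_def by simp
      then have "anc m a" using m yq anc_trans by blast
      then show ?thesis using m by auto
    qed
  qed
qed

end


context TD
begin

lemma bag_path:
  assumes "t \<in> I" "t' \<in> I" "u \<in> X t" "u \<in> X t'"
  shows "\<exists>p. simple_path I T p t t' \<and> (\<forall>j\<in>set p. u \<in> X j)"
proof -
  obtain p where p: "simple_path I T p t t'" using ex1_implies_ex[OF uniq_path[OF assms(1,2)]] by (rule exE)
  have "\<forall>j\<in>set p. u \<in> X j"
  proof
    fix j assume "j \<in> set p"
    then have "X t \<inter> X t' \<subseteq> X j" by (rule conv[OF assms(1,2) p])
    moreover have "u \<in> X t \<inter> X t'" using assms(3,4) by (rule IntI)
    ultimately show "u \<in> X j" by (rule subsetD)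
  qed
  then show ?thesis using p by (intro exI[of _ p] conjI)
qed

definition r where
  "r v = (SOME t. t \<in> I \<and> v \<in> X t \<and> (\<forall>t'. t' \<in> I \<and> v \<in> X t' \<longrightarrow> depth t \<le> depth t'))"

lemma r_min:
  assumes "v \<in> V"
  shows "r v \<in> I \<and> v \<in> X (r v) \<and> (\<forall>t'. t' \<in> I \<and> v \<in> X t' \<longrightarrow> depth (r v) \<le> depth t')"
proof -
  have "v \<in> (\<Union>i\<in>I. X i)" using assms UX by simp
  then obtain t0 where t0: "t0 \<in> I" "v \<in> X t0" by (rule UN_E)
  have "\<exists>t. (t \<in> I \<and> v \<in> X t) \<and> (\<forall>t'. t' \<in> I \<and> v \<in> X t' \<longrightarrow> depth t \<le> depth t')"
    by (rule ex_has_least_nat[of "\<lambda>t. t \<in> I \<and> v \<in> X t" t0 depth, OF conjI[OF t0]])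
  then have "\<exists>t. t \<in> I \<and> v \<in> X t \<and> (\<forall>t'. t' \<in> I \<and> v \<in> X t' \<longrightarrow> depth t \<le> depth t')" by blast
  then show ?thesis unfolding r_def by (rule someI_ex)
qed

lemma r_I: "v \<in> V \<Longrightarrow> r v \<in> I" using r_min by blast
lemma r_X: "v \<in> V \<Longrightarrow> v \<in> X (r v)" using r_min by blast

lemma r_anc:
  assumes v: "v \<in> V" and t: "t \<in> I" and vt: "v \<in> X t"
  shows "anc (r v) t"
proof -
  obtain p where p: "simple_path I T p (r v) t" and pv: "\<forall>j\<in>set p. v \<in> X j"
    using bag_path[OF r_I[OF v] t r_X[OF v] vt] by blast
  have pp: "p \<noteq> []" "hd p = r v" "last p = t" "set p \<subseteq> I" using sp_parts[OF p] by simp_all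
  obtain m where m: "m \<in> set p" "\<forall>x\<in>set p. anc m x"
    using walk_top[OF simple_path_walk[OF p] pp(1) pp(4)] by blast
  have mI: "m \<in> I" using m(1) pp(4) by blast
  have "v \<in> X m" using pv m(1) by blast
  then have d1: "depth (r v) \<le> depth m" using r_min[OF v] mI by blast
  have rvp: "r v \<in> set p" using pp(1,2) hd_in_set by metis
  have "anc m (r v)" using m(2) rvp by blast
  then have "m = r v" using anc_depth_eq d1 by blast
  moreover have "t \<in> set p" using pp(1,3) last_in_set by metis
  ultimately show ?thesis using m(2) by blast
qed

lemma L_pass:
  assumes t: "t \<in> I" and ut: "u \<in> X t" and st: "anc s t" and nr: "\<not> anc s (r u)"
  shows "u \<in> X s"
proof -
  have u: "u \<in> V" using XV[OF t] ut by blast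
  obtain p where p: "simple_path I T p (r u) t" and pv: "\<forall>j\<in>set p. u \<in> X j"
    using bag_path[OF r_I[OF u] t r_X[OF u] ut] by blast
  have pp: "p \<noteq> []" "hd p = r u" "last p = t" "set p \<subseteq> I" using sp_parts[OF p] by simp_all
  have "s \<in> set p" using walk_pass[OF simple_path_walk[OF p] pp(1) pp(4)] pp(2,3) st nr by simp
  then show ?thesis using pv by blast
qed

lemma L_mid:
  assumes t: "t \<in> I" and ut: "u \<in> X t" and rs: "anc (r u) s" and st: "anc s t"
  shows "u \<in> X s"
proof (cases "s = r u")
  case True
  have u: "u \<in> V" using XV[OF t] ut by blast
  then show ?thesis using True r_X by simp
next
  case False
  then have "\<not> anc s (r u)" using anc_antisym rs by blast
  then show ?thesis using L_pass[OF t ut st] by blast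
qed

lemma comparable:
  assumes t: "t \<in> I" and ut: "u \<in> X t" and vt: "v \<in> X t"
  shows "anc (r u) (r v) \<or> anc (r v) (r u)"
proof -
  have u: "u \<in> V" and v: "v \<in> V" using XV[OF t] ut vt by blast+
  show ?thesis using anc_total[OF r_anc[OF u t ut] r_anc[OF v t vt]] .
qed

lemma share:
  assumes t: "t \<in> I" and ut: "u \<in> X t" and vt: "v \<in> X t" and d: "depth (r u) \<le> depth (r v)"
  shows "u \<in> X (r v)"
proof -
  have u: "u \<in> V" and v: "v \<in> V" using XV[OF t] ut vt by blast+
  from comparable[OF t ut vt] show ?thesis
  proof
    assume "anc (r u) (r v)"
    then show ?thesis using L_mid[OF t ut _ r_anc[OF v t vt]] by blast
  next
    assume "anc (r v) (r u)"
    then have "r v = r u" using anc_depth_eq d by blast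
    then show ?thesis using r_X[OF u] by simp
  qed
qed

definition M where "M = Max ((\<lambda>t. card (X t)) ` I)"

lemma card_M: "t \<in> I \<Longrightarrow> card (X t) \<le> M"
  unfolding M_def using finI by (intro Max_ge) auto

lemma color_S:
  "finite S \<Longrightarrow> S \<subseteq> V \<Longrightarrow> \<exists>c::'a \<Rightarrow> nat. (\<forall>v\<in>S. c v < M) \<and> (\<forall>t\<in>I. inj_on c (X t \<inter> S))"
proof (induction "card S" arbitrary: S rule: less_induct)
  case less
  show ?case
  proof (cases "S = {}")
    case True
    then show ?thesis by (intro exI[of _ "\<lambda>_. 0"]) simp
  next
    case False
    define d where "d = Max ((\<lambda>u. depth (r u)) ` S)"
    have "d \<in> (\<lambda>u. depth (r u)) ` S"
      unfolding d_def using less.prems False by (intro Max_in) auto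
    then obtain v where v: "v \<in> S" "depth (r v) = d" by auto
    have dmax: "\<forall>u\<in>S. depth (r u) \<le> depth (r v)"
      using v(2) less.prems(1) unfolding d_def by (intro ballI Max_ge) auto
    have vV: "v \<in> V" using v(1) less.prems(2) by (rule subsetD[rotated])
    have "card (S - {v}) < card S" using less.prems(1) v(1) by (rule card_Diff1_less)
    moreover have "finite (S - {v})" "S - {v} \<subseteq> V" using less.prems by auto
    ultimately have "\<exists>c::'a \<Rightarrow> nat. (\<forall>u\<in>S - {v}. c u < M) \<and> (\<forall>t\<in>I. inj_on c (X t \<inter> (S - {v})))"
      by (rule less.hyps)
    then obtain c :: "'a \<Rightarrow> nat" where c: "\<forall>u\<in>S - {v}. c u < M" "\<forall>t\<in>I. inj_on c (X t \<inter> (S - {v}))"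
      by blast
    define C where "C = c ` (X (r v) - {v})"
    have rvI: "r v \<in> I" using r_I[OF vV] .
    have finX: "finite (X (r v))" using XV[OF rvI] finV by (rule finite_subset)
    have "card C \<le> card (X (r v) - {v})" unfolding C_def using finX by (simp add: card_image_le)
    also have "\<dots> < card (X (r v))" using finX r_X[OF vV] by (rule card_Diff1_less)
    also have "\<dots> \<le> M" using card_M[OF rvI] .
    finally have cC: "card C < M" .
    have "\<not> {..<M} \<subseteq> C"
    proof
      assume "{..<M} \<subseteq> C"
      moreover have "finite C" unfolding C_def using finX by simp
      ultimately have "card {..<M} \<le> card C" by (intro card_mono)
      then show False using cC by simp
    qed
    then obtain col where col: "col < M" "col \<notin> C" by auto
    define c' where "c' = c(v := col)"
    have "\<forall>u\<in>S. c' u < M" using c(1) col(1) unfolding c'_def by simp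
    moreover have "\<forall>t\<in>I. inj_on c' (X t \<inter> S)"
    proof
      fix t assume t: "t \<in> I"
      have conflict: "c y \<noteq> col" if y: "y \<in> X t \<inter> S" "y \<noteq> v" "v \<in> X t" for y
      proof -
        have "y \<in> X t" "y \<in> S" using y by auto
        then have "y \<in> X (r v)" using share[OF t _ that(3)] dmax by blast
        then have "c y \<in> C" unfolding C_def using y by blast
        then show ?thesis using col by blast
      qed
      show "inj_on c' (X t \<inter> S)"
      proof (rule inj_onI)
        fix x y assume x: "x \<in> X t \<inter> S" and y: "y \<in> X t \<inter> S" and e: "c' x = c' y"
        show "x = y"
        proof (cases "x = v")
          case True
          show ?thesis
          proof (rule ccontr)
            assume "x \<noteq> y"
            then have "c y = col" using e True unfolding c'_def by simp
            then show False using conflict[OF y] \<open>x \<noteq> y\<close> True x by auto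
          qed
        next
          case xv: False
          show ?thesis
          proof (cases "y = v")
            case True
            then have "c x = col" using e xv unfolding c'_def by simp
            then show ?thesis using conflict[OF x xv] True y by auto
          next
            case False
            then have "c x = c y" using e xv unfolding c'_def by simp
            moreover have "x \<in> X t \<inter> (S - {v})" "y \<in> X t \<inter> (S - {v})" using x y xv False by auto
            ultimately show ?thesis using c(2) t unfolding inj_on_def by blast
          qed
        qed
      qed
    qed
    ultimately show ?thesis by blast
  qed
qed

lemma color_ex: "\<exists>c::'a \<Rightarrow> nat. (\<forall>v\<in>V. c v < M) \<and> (\<forall>t\<in>I. inj_on c (X t))"
proof -
  obtain c :: "'a \<Rightarrow> nat" where c: "\<forall>v\<in>V. c v < M" "\<forall>t\<in>I. inj_on c (X t \<inter> V)"
    using color_S[OF finV] by blast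
  have "\<forall>t\<in>I. X t \<inter> V = X t" using XV by blast
  then show ?thesis using c by auto
qed

end


locale TDC = TD V E I T X for V :: "'a set" and E and I :: "'i::linorder set" and T and X +
  fixes c :: "'a \<Rightarrow> nat"
  assumes cM: "v \<in> V \<Longrightarrow> c v < M" and cinj: "t \<in> I \<Longrightarrow> inj_on c (X t)"
begin

definition rk :: "'i \<Rightarrow> real" where "rk t = real (card {u\<in>I. P u < P t})"
definition desc where "desc s = {t\<in>I. anc s t}"
definition aa :: "nat \<Rightarrow> 'a \<Rightarrow> nat" where
  "aa j x = Min (insert (depth (r x) + 1) ((\<lambda>w. depth (r w)) ` {w\<in>X (r x). c w = j \<and> E x w}))"
definition B :: real where "B = real (card I) + 1"
definition lo :: "'a \<Rightarrow> nat \<Rightarrow> real" where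
  "lo v i = (if i = 0 then rk (r v) else if c v = i - 1 then real (depth (r v)) else real (aa (i - 1) v))"
definition hi :: "'a \<Rightarrow> nat \<Rightarrow> real" where
  "hi v i = (if i = 0 then Max (rk ` desc (r v)) else if c v = i - 1 then real (depth (r v)) else B)"

lemma rk_le:
  assumes "s \<in> I" "t \<in> I" "prefix (P s) (P t)"
  shows "rk s \<le> rk t"
proof -
  have le: "P s \<le> P t" using assms(3) by (rule prefix_le_list)
  have "{u\<in>I. P u < P s} \<subseteq> {u\<in>I. P u < P t}" using le by auto
  then have "card {u\<in>I. P u < P s} \<le> card {u\<in>I. P u < P t}" using finI by (intro card_mono) auto
  then show ?thesis unfolding rk_def by simp
qed

lemma rk_less:
  assumes "s \<in> I" "t \<in> I" "P s < P t"
  shows "rk s < rk t"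
proof -
  have "{u\<in>I. P u < P s} \<subset> {u\<in>I. P u < P t}"
  proof
    show "{u\<in>I. P u < P s} \<subseteq> {u\<in>I. P u < P t}" using assms(3) by auto
    show "{u\<in>I. P u < P s} \<noteq> {u\<in>I. P u < P t}" using assms by auto
  qed
  then have "card {u\<in>I. P u < P s} < card {u\<in>I. P u < P t}" using finI by (intro psubset_card_mono) auto
  then show ?thesis unfolding rk_def by simp
qed

lemma desc_fin: "finite (desc s)" unfolding desc_def using finI by simp

lemma desc_self: "s \<in> I \<Longrightarrow> s \<in> desc s" unfolding desc_def using anc_refl by simp

lemma hi0_ge: "t \<in> desc s \<Longrightarrow> rk t \<le> Max (rk ` desc s)"
  using desc_fin by (intro Max_ge) auto

lemma hi0_att: "s \<in> I \<Longrightarrow> \<exists>t\<in>desc s. Max (rk ` desc s) = rk t"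
proof -
  assume s: "s \<in> I"
  have "Max (rk ` desc s) \<in> rk ` desc s" using desc_fin desc_self[OF s] by (intro Max_in) auto
  then show ?thesis by auto
qed

lemma desc_prefix: "t \<in> desc s \<Longrightarrow> \<exists>zs. P t = P s @ zs"
  unfolding desc_def anc_def prefix_def by auto

lemma par_lt:
  assumes "s \<in> I" "t \<in> I" "\<not> prefix (P s) (P t)" "\<not> prefix (P t) (P s)"
  shows "(\<forall>s'\<in>desc s. \<forall>t'\<in>desc t. P s' < P t') \<or> (\<forall>s'\<in>desc s. \<forall>t'\<in>desc t. P t' < P s')"
proof -
  have "P s \<parallel> P t" using assms(3,4) by blast
  then obtain as b bs c' cs where d: "b \<noteq> c'" "P s = as @ b # bs" "P t = as @ c' # cs"
    using parallel_decomp by blast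
  show ?thesis
  proof (cases "b < c'")
    case True
    have "\<forall>s'\<in>desc s. \<forall>t'\<in>desc t. P s' < P t'"
    proof (intro ballI)
      fix s' t' assume "s' \<in> desc s" "t' \<in> desc t"
      then obtain zs ys where "P s' = P s @ zs" "P t' = P t @ ys" using desc_prefix by blast
      then show "P s' < P t'" using d True lex_split by simp
    qed
    then show ?thesis by blast
  next
    case False
    then have lt: "c' < b" using d(1) by simp
    have "\<forall>s'\<in>desc s. \<forall>t'\<in>desc t. P t' < P s'"
    proof (intro ballI)
      fix s' t' assume "s' \<in> desc s" "t' \<in> desc t"
      then obtain zs ys where "P s' = P s @ zs" "P t' = P t @ ys" using desc_prefix by blast
      then show "P t' < P s'" using d lt lex_split by simp
    qed
    then show ?thesis by blast
  qed
qed

lemma aa_fin: "x \<in> V \<Longrightarrow> finite (insert (depth (r x) + 1) ((\<lambda>w. depth (r w)) ` {w\<in>X (r x). c w = j \<and> E x w}))"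
proof -
  assume x: "x \<in> V"
  have "finite (X (r x))" using XV[OF r_I[OF x]] finV by (rule finite_subset)
  then show ?thesis by simp
qed

lemma aa_le1: "x \<in> V \<Longrightarrow> aa j x \<le> depth (r x) + 1"
  unfolding aa_def using aa_fin by (intro Min_le) auto

lemma aa_le_w: "x \<in> V \<Longrightarrow> w \<in> X (r x) \<Longrightarrow> c w = j \<Longrightarrow> E x w \<Longrightarrow> aa j x \<le> depth (r w)"
  unfolding aa_def using aa_fin by (intro Min_le) auto

lemma aa_gt:
  assumes x: "x \<in> V" and d1: "d < depth (r x) + 1"
    and d2: "\<And>w. w \<in> X (r x) \<Longrightarrow> c w = j \<Longrightarrow> E x w \<Longrightarrow> d < depth (r w)"
  shows "d < aa j x"
  unfolding aa_def using aa_fin[OF x] d1 d2 by (subst Min_gr_iff) auto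

lemma depth_B: "t \<in> I \<Longrightarrow> real (depth t) + 1 \<le> B"
  unfolding B_def using depth_le by simp

lemma lo_le_hi: assumes v: "v \<in> V" shows "lo v i \<le> hi v i"
proof -
  have rI: "r v \<in> I" using r_I[OF v] .
  show ?thesis
  proof (cases "i = 0")
    case True
    then show ?thesis unfolding lo_def hi_def using hi0_ge[OF desc_self[OF rI]] by simp
  next
    case False
    have "real (aa (i - 1) v) \<le> real (depth (r v)) + 1" using aa_le1[OF v, of "i - 1"] by simp
    then have "real (aa (i - 1) v) \<le> B" using depth_B[OF rI] by simp
    then show ?thesis unfolding lo_def hi_def using False by simp
  qed
qed

lemma color_adj:
  assumes e: "E x w"
  shows "aa (c w) x \<le> depth (r w)"
proof -
  have x: "x \<in> V" and w: "w \<in> V" using Eprops[OF e] by auto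
  obtain t where t: "t \<in> I" "x \<in> X t" "w \<in> X t" using Ebag[OF e] by blast
  from comparable[OF t(1) t(3) t(2)] show ?thesis
  proof
    assume "anc (r w) (r x)"
    then have "w \<in> X (r x)" using L_mid[OF t(1) t(3) _ r_anc[OF x t(1) t(2)]] by blast
    then show ?thesis using aa_le_w[OF x _ refl e] by blast
  next
    assume h: "anc (r x) (r w)"
    show ?thesis
    proof (cases "r x = r w")
      case True
      then have "w \<in> X (r x)" using r_X[OF w] by simp
      then show ?thesis using aa_le_w[OF x _ refl e] by blast
    next
      case False
      then have "depth (r x) < depth (r w)" using anc_depth_less[OF h] by blast
      then show ?thesis using aa_le1[OF x, of "c w"] by simp
    qed
  qed
qed

lemma dim0_nest:
  assumes u: "u \<in> V" and v: "v \<in> V" and h: "anc (r u) (r v)"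
  shows "max (lo u 0) (lo v 0) \<le> min (hi u 0) (hi v 0)"
proof -
  have a1: "rk (r u) \<le> rk (r v)" using h unfolding anc_def by (intro rk_le) auto
  have "r v \<in> desc (r u)" using h unfolding desc_def anc_def by simp
  then have a2: "rk (r v) \<le> hi u 0" unfolding hi_def using hi0_ge by simp
  have a3: "lo v 0 \<le> hi v 0" using lo_le_hi[OF v] .
  have a4: "lo u 0 \<le> hi u 0" using lo_le_hi[OF u] .
  show ?thesis using a1 a2 a3 a4 unfolding lo_def by simp
qed

lemma K1:
  assumes e: "E u v" and i: "i < M + 1"
  shows "max (lo u i) (lo v i) \<le> min (hi u i) (hi v i)"
proof -
  have u: "u \<in> V" and v: "v \<in> V" and uv: "u \<noteq> v" and e': "E v u" using Eprops[OF e] by auto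
  obtain t where t: "t \<in> I" "u \<in> X t" "v \<in> X t" using Ebag[OF e] by blast
  show ?thesis
  proof (cases "i = 0")
    case True
    from comparable[OF t] show ?thesis
    proof
      assume "anc (r u) (r v)"
      then show ?thesis using dim0_nest[OF u v] True by simp
    next
      assume "anc (r v) (r u)"
      then have "max (lo v 0) (lo u 0) \<le> min (hi v 0) (hi u 0)" using dim0_nest[OF v u] by simp
      then show ?thesis using True by (simp add: max.commute min.commute)
    qed
  next
    case False
    define j where "j = i - 1"
    have cuv: "c u \<noteq> c v" using cinj[OF t(1)] t(2,3) uv unfolding inj_on_def by blast
    have du: "real (depth (r u)) + 1 \<le> B" using depth_B[OF r_I[OF u]] .
    have dv: "real (depth (r v)) + 1 \<le> B" using depth_B[OF r_I[OF v]] .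
    have au: "real (aa j u) \<le> B" using aa_le1[OF u, of j] du by linarith
    have av: "real (aa j v) \<le> B" using aa_le1[OF v, of j] dv by linarith
    show ?thesis
    proof (cases "c u = j")
      case True
      then have "c v \<noteq> j" using cuv by simp
      moreover have "aa j v \<le> depth (r u)" using color_adj[OF e'] True by simp
      ultimately show ?thesis using True False du unfolding lo_def hi_def j_def[symmetric] by simp
    next
      case cu: False
      show ?thesis
      proof (cases "c v = j")
        case True
        have "aa j u \<le> depth (r v)" using color_adj[OF e] True by simp
        then show ?thesis using True cu False dv unfolding lo_def hi_def j_def[symmetric] by simp
      next
        case False
        then show ?thesis using cu \<open>i \<noteq> 0\<close> au av unfolding lo_def hi_def j_def[symmetric] by simp
      qed
    qed
  qed
qed

lemma sep:
  assumes w: "w \<in> V" and x: "x \<in> V" and wx: "w \<noteq> x" and ne: "\<not> E x w" and h: "anc (r w) (r x)"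
  shows "\<exists>i<M + 1. \<not> max (lo w i) (lo x i) \<le> min (hi w i) (hi x i)"
proof -
  define i where "i = Suc (c w)"
  have i: "i < M + 1" using cM[OF w] unfolding i_def by simp
  have rxI: "r x \<in> I" using r_I[OF x] .
  have lw: "lo w i = real (depth (r w))" "hi w i = real (depth (r w))" unfolding lo_def hi_def i_def by simp_all
  have "\<not> max (lo w i) (lo x i) \<le> min (hi w i) (hi x i)"
  proof (cases "c x = c w")
    case True
    have lx: "lo x i = real (depth (r x))" "hi x i = real (depth (r x))" unfolding lo_def hi_def i_def using True by simp_all
    have "depth (r w) \<noteq> depth (r x)"
    proof
      assume "depth (r w) = depth (r x)"
      then have "r w = r x" using anc_depth_eq[OF h] by simp
      then have "w \<in> X (r x)" "x \<in> X (r x)" using r_X[OF w] r_X[OF x] by simp_all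
      then show False using cinj[OF rxI] True wx unfolding inj_on_def by blast
    qed
    then show ?thesis using lw lx by auto
  next
    case False
    have lx: "lo x i = real (aa (c w) x)" unfolding lo_def i_def using False by simp
    have "depth (r w) < aa (c w) x"
    proof (rule aa_gt[OF x])
      show "depth (r w) < depth (r x) + 1" using anc_depth_le[OF h] by simp
    next
      fix w' assume w'1: "w' \<in> X (r x)" and w'2: "c w' = c w" and w'3: "E x w'"
      have w'V: "w' \<in> V" using Eprops[OF w'3] by simp
      have "w' \<noteq> w" using w'3 ne by auto
      have a': "anc (r w') (r x)" using r_anc[OF w'V rxI w'1] .
      have "\<not> anc (r w') (r w)"
      proof
        assume "anc (r w') (r w)"
        then have "w' \<in> X (r w)" using L_mid[OF rxI w'1 _ h] by blast
        moreover have "w \<in> X (r w)" using r_X[OF w] .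
        ultimately show False using cinj[OF r_I[OF w]] w'2 \<open>w' \<noteq> w\<close> unfolding inj_on_def by blast
      qed
      moreover have "anc (r w) (r w') \<or> anc (r w') (r w)" using anc_total[OF h a'] .
      ultimately have "anc (r w) (r w')" "r w \<noteq> r w'" using anc_refl r_I[OF w] by auto
      then show "depth (r w) < depth (r w')" using anc_depth_less by blast
    qed
    then show ?thesis using lw lx by auto
  qed
  then show ?thesis using i by blast
qed

lemma inc:
  assumes u: "u \<in> V" and v: "v \<in> V" and h1: "\<not> anc (r u) (r v)" and h2: "\<not> anc (r v) (r u)"
  shows "\<not> max (lo u 0) (lo v 0) \<le> min (hi u 0) (hi v 0)"
proof -
  have uI: "r u \<in> I" and vI: "r v \<in> I" using r_I u v by auto
  have p1: "\<not> prefix (P (r u)) (P (r v))" and p2: "\<not> prefix (P (r v)) (P (r u))"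
    using h1 h2 uI vI unfolding anc_def by auto
  from par_lt[OF uI vI p1 p2] show ?thesis
  proof
    assume a: "\<forall>s'\<in>desc (r u). \<forall>t'\<in>desc (r v). P s' < P t'"
    obtain s' where s': "s' \<in> desc (r u)" "Max (rk ` desc (r u)) = rk s'" using hi0_att[OF uI] by blast
    have "P s' < P (r v)" using a s'(1) desc_self[OF vI] by blast
    then have "rk s' < rk (r v)" using s'(1) vI unfolding desc_def by (intro rk_less) auto
    then have "hi u 0 < lo v 0" unfolding hi_def lo_def using s'(2) by simp
    then show ?thesis by simp
  next
    assume a: "\<forall>s'\<in>desc (r u). \<forall>t'\<in>desc (r v). P t' < P s'"
    obtain t' where t': "t' \<in> desc (r v)" "Max (rk ` desc (r v)) = rk t'" using hi0_att[OF vI] by blast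
    have "P t' < P (r u)" using a t'(1) desc_self[OF uI] by blast
    then have "rk t' < rk (r u)" using t'(1) uI unfolding desc_def by (intro rk_less) auto
    then have "hi v 0 < lo u 0" unfolding hi_def lo_def using t'(2) by simp
    then show ?thesis by simp
  qed
qed

lemma box: "box_rep V E (M + 1)"
  unfolding box_rep_def
proof (intro exI conjI ballI allI impI)
  fix v i assume "v \<in> V" "i < M + 1"
  then show "lo v i \<le> hi v i" using lo_le_hi by blast
next
  fix u v assume u: "u \<in> V" and v: "v \<in> V" and uv: "u \<noteq> v"
  show "E u v \<longleftrightarrow> (\<forall>i<M + 1. max (lo u i) (lo v i) \<le> min (hi u i) (hi v i))"
  proof
    assume "E u v" then show "\<forall>i<M + 1. max (lo u i) (lo v i) \<le> min (hi u i) (hi v i)" using K1 by blast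
  next
    assume all: "\<forall>i<M + 1. max (lo u i) (lo v i) \<le> min (hi u i) (hi v i)"
    show "E u v"
    proof (rule ccontr)
      assume ne: "\<not> E u v"
      have ne': "\<not> E v u" using ne Eprops by blast
      show False
      proof (cases "anc (r u) (r v)")
        case True
        then obtain i where "i < M + 1" "\<not> max (lo u i) (lo v i) \<le> min (hi u i) (hi v i)"
          using sep[OF u v uv ne'] by blast
        then show False using all by blast
      next
        case F1: False
        show False
        proof (cases "anc (r v) (r u)")
          case True
          then obtain i where "i < M + 1" "\<not> max (lo v i) (lo u i) \<le> min (hi v i) (hi u i)"
            using sep[OF v u uv[symmetric] ne] by blast
          then show False using all by (simp add: max.commute min.commute)
        next
          case False
          then show False using inc[OF u v F1] all by auto
        qed
      qed
    qed
  qed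
qed

end

lemma single_path: "simple_path {0::nat} (\<lambda>_ _. False) p 0 0 \<longleftrightarrow> p = [0]"
proof
  assume h: "simple_path {0::nat} (\<lambda>_ _. False) p 0 0"
  have p: "p \<noteq> []" "distinct p" "set p \<subseteq> {0}" using sp_parts[OF h] by simp_all
  then obtain x q where pq: "p = x # q" by (cases p) auto
  have x: "x = 0" using p(3) pq by simp
  have "q = []"
  proof (rule ccontr)
    assume "q \<noteq> []"
    then have "hd q \<in> set q" by simp
    then have "hd q = 0" using p(3) pq by auto
    then have "0 \<in> set q" using \<open>hd q \<in> set q\<close> by simp
    then show False using p(2) pq x by simp
  qed
  then show "p = [0]" using pq x by simp
next
  assume "p = [0]"
  then show "simple_path {0::nat} (\<lambda>_ _. False) p 0 0" unfolding simple_path_def by simp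
qed

lemma trivial_td:
  assumes "simple_graph V E"
  shows "tree_decomp V E {0::nat} (\<lambda>_ _. False) (\<lambda>_. V)"
proof -
  have "is_tree {0::nat} (\<lambda>_ _. False)" unfolding is_tree_def
  proof (intro conjI)
    show "\<forall>x\<in>{0::nat}. \<forall>y\<in>{0}. \<exists>!p. simple_path {0} (\<lambda>_ _. False) p x y"
      using single_path by auto
  qed auto
  moreover have "\<forall>u v. E u v \<longrightarrow> (\<exists>i\<in>{0::nat}. u \<in> V \<and> v \<in> V)"
    using assms unfolding simple_graph_def by blast
  ultimately show ?thesis unfolding tree_decomp_def by auto
qed

theorem theorem2:
  fixes V :: "'a set" and E :: "'a \<Rightarrow> 'a \<Rightarrow> bool"
  assumes "simple_graph V E"
  shows "int (boxicity V E) \<le> treewidth V E + 2"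
proof -
  define Q where "Q = (\<lambda>w. \<exists>(I::nat set) T X. tree_decomp V E I T X \<and> decomp_width I X = w)"
  have tw: "treewidth V E = (LEAST w. Q w)" unfolding treewidth_def Q_def by simp
  have Q0: "Q (int (card V) - 1)"
  proof -
    have "decomp_width {0::nat} (\<lambda>_. V) = int (card V) - 1" unfolding decomp_width_def by simp
    then show ?thesis unfolding Q_def using trivial_td[OF assms] by blast
  qed
  define n0 where "n0 = (LEAST n. Q (int n - 1))"
  have Qn0: "Q (int n0 - 1)" unfolding n0_def by (rule LeastI[of "\<lambda>n. Q (int n - 1)" "card V"]) (rule Q0)
  have mn: "int n0 - 1 \<le> w" if qw: "Q w" for w
  proof -
    obtain I :: "nat set" and T X where "tree_decomp V E I T X" "decomp_width I X = w"
      using qw unfolding Q_def by blast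
    then have "w = int (Max ((\<lambda>i. card (X i)) ` I)) - 1" "Q (int (Max ((\<lambda>i. card (X i)) ` I)) - 1)"
      unfolding decomp_width_def Q_def by auto
    moreover from this(2) have "n0 \<le> Max ((\<lambda>i. card (X i)) ` I)" unfolding n0_def by (rule Least_le)
    ultimately show ?thesis by simp
  qed
  have "treewidth V E = int n0 - 1" unfolding tw using Qn0 mn by (rule Least_equality)
  moreover obtain I :: "nat set" and T X where td: "tree_decomp V E I T X" and w: "decomp_width I X = int n0 - 1"
    using Qn0 unfolding Q_def by blast
  interpret TD V E I T X using assms td by unfold_locales
  obtain c :: "'a \<Rightarrow> nat" where c: "\<forall>v\<in>V. c v < M" "\<forall>t\<in>I. inj_on c (X t)" using color_ex by blast
  interpret TDC V E I T X c using c by unfold_locales auto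
  have "box_rep V E (M + 1)" by (rule box)
  then have b: "boxicity V E \<le> M + 1" unfolding boxicity_def by (rule Least_le)
  have "decomp_width I X = int M - 1" unfolding decomp_width_def M_def by simp
  ultimately show ?thesis using b w by simp
qed

end
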